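(* Let $p\in\mathbb{N}$, let $Z_1,\dots,Z_p$ be i.i.d. $N(0,1)$, let $a\ge1$ and $\nu_a=\mathbb{E}(Z_1^2\mid|Z_1|\ge a)$. Then for all $x>0$, $$\mathbb{P}\Big[\sum_{i=1}^p(Z_i^2-\nu_a)\mathbb{1}(|Z_i|\ge a)\le-5\big\{(pe^{-a^2/2}x)^{1/2}+x\big\}\Big]\le e^{-x}.$$ *)

theory Defs
  imports "HOL-Probability.Probability"
begin

definition nu :: "real \<Rightarrow> real" where
  "nu a = (LINT z:{z. \<bar>z\<bar> \<ge> a}|lborel. z\<^sup>2 * std_normal_density z) /
          (LINT z:{z. \<bar>z\<bar> \<ge> a}|lborel. std_normal_density z)"

end

theory Submission imports Defs "HOL-Real_Asymp.Real_Asymp" begin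

lemma FTC_atLeast_bochner:
  fixes f F :: "real \<Rightarrow> real"
  assumes fm: "f \<in> borel_measurable borel"
    and d: "\<And>x. a \<le> x \<Longrightarrow> DERIV F x :> f x"
    and nn: "\<And>x. a \<le> x \<Longrightarrow> 0 \<le> f x"
    and lim: "(F \<longlongrightarrow> T) at_top"
  shows "has_bochner_integral lborel (\<lambda>x. indicator {a..} x * f x) (T - F a)"
proof -
  have mono: "F a \<le> F y" if "a \<le> y" for y
    using d nn that by (intro DERIV_nonneg_imp_nondecreasing[of a y F]) (auto intro: order_trans)
  have Ta: "F a \<le> T"
    by (rule tendsto_lowerbound[OF lim]) (auto simp: eventually_at_top_linorder intro!: exI[of _ a] mono)
  have eq: "(\<integral>\<^sup>+x. ennreal (f x) * indicator {a ..} x \<partial>lborel) = T - F a"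
    by (rule nn_integral_FTC_atLeast[OF fm d nn lim])
  show ?thesis
  proof (rule has_bochner_integral_nn_integral)
    show "(\<lambda>x. indicator {a..} x * f x) \<in> borel_measurable lborel" using fm by simp
    show "AE x in lborel. 0 \<le> indicator {a..} x * f x" using nn by (auto split: split_indicator)
    show "0 \<le> T - F a" using Ta by simp
    have "(\<integral>\<^sup>+x. ennreal (indicator {a..} x * f x) \<partial>lborel) = (\<integral>\<^sup>+x. ennreal (f x) * indicator {a ..} x \<partial>lborel)"
      by (intro nn_integral_cong) (auto split: split_indicator)
    then show "(\<integral>\<^sup>+x. ennreal (indicator {a..} x * f x) \<partial>lborel) = ennreal (T - F a)"
      using eq by simp
  qed
qed

lemma DERIV_phi: "DERIV std_normal_density x :> - x * std_normal_density x"
proof -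
  define c where "c = 1 / sqrt (2 * pi)"
  have "DERIV (\<lambda>x. c * exp (- x\<^sup>2 / 2)) x :> - x * (c * exp (- x\<^sup>2 / 2))"
    by (auto intro!: derivative_eq_intros simp: algebra_simps)
  moreover have "std_normal_density = (\<lambda>x. c * exp (- x\<^sup>2 / 2))"
    by (simp add: std_normal_density_def[abs_def] c_def)
  ultimately show ?thesis by simp
qed

lemma DERIV_phi'[derivative_intros]: "(g has_real_derivative g') (at x within S) \<Longrightarrow>
  ((\<lambda>x. std_normal_density (g x)) has_real_derivative (- g x * std_normal_density (g x) * g')) (at x within S)"
  using DERIV_chain2[OF DERIV_phi] by (simp add: has_field_derivative_subset)

lemma I1:
  assumes "a \<ge> 1"
  shows "has_bochner_integral lborel (\<lambda>z. indicator {a..} z * ((z\<^sup>2 - 1) * std_normal_density z)) (a * std_normal_density a)"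
proof -
  have "has_bochner_integral lborel (\<lambda>z. indicator {a..} z * ((z\<^sup>2 - 1) * std_normal_density z)) (0 - (- a * std_normal_density a))"
  proof (rule FTC_atLeast_bochner)
    show "(\<lambda>z. (z\<^sup>2 - 1) * std_normal_density z) \<in> borel_measurable borel" by measurable
    fix x assume "a \<le> x"
    show "DERIV (\<lambda>z. - z * std_normal_density z) x :> (x\<^sup>2 - 1) * std_normal_density x"
      by (auto intro!: derivative_eq_intros simp: algebra_simps power2_eq_square)
    show "0 \<le> (x\<^sup>2 - 1) * std_normal_density x" using \<open>a \<le> x\<close> assms
      by (intro mult_nonneg_nonneg) (auto intro: one_le_power)
  next
    show "((\<lambda>z. - z * std_normal_density z) \<longlongrightarrow> 0) at_top"
      unfolding std_normal_density_def by real_asymp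
  qed
  then show ?thesis by simp
qed

lemma I2:
  assumes "a \<ge> 1"
  shows "has_bochner_integral lborel (\<lambda>z. indicator {a..} z * (std_normal_density z * (z^4 + 2*z\<^sup>2 - 1) / (1 + z\<^sup>2)\<^sup>2)) (a * std_normal_density a / (1 + a\<^sup>2))"
proof -
  have "has_bochner_integral lborel (\<lambda>z. indicator {a..} z * (std_normal_density z * (z^4 + 2*z\<^sup>2 - 1) / (1 + z\<^sup>2)\<^sup>2)) (0 - (- a * std_normal_density a / (1 + a\<^sup>2)))"
  proof (rule FTC_atLeast_bochner)
    show "(\<lambda>z. std_normal_density z * (z^4 + 2*z\<^sup>2 - 1) / (1 + z\<^sup>2)\<^sup>2) \<in> borel_measurable borel" by measurable
    fix x assume "a \<le> x"
    have p: "1 + x\<^sup>2 \<noteq> 0" using zero_le_power2[of x] by linarith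
    show "DERIV (\<lambda>z. - z * std_normal_density z / (1 + z\<^sup>2)) x :> std_normal_density x * (x^4 + 2*x\<^sup>2 - 1) / (1 + x\<^sup>2)\<^sup>2"
      apply (rule derivative_eq_intros refl | simp add: p)+
      using p by (simp add: field_simps power2_eq_square) (simp add: algebra_simps power4_eq_xxxx)
    have "1 \<le> x\<^sup>2" using \<open>a \<le> x\<close> assms by (auto intro: one_le_power)
    then have "1 \<le> x^4" by (metis power2_eq_square power4_eq_xxxx one_le_power[of "x\<^sup>2" 2] power_mult_distrib mult.assoc power2_eq_square)
    then show "0 \<le> std_normal_density x * (x^4 + 2*x\<^sup>2 - 1) / (1 + x\<^sup>2)\<^sup>2" using \<open>1 \<le> x\<^sup>2\<close>
      by (intro divide_nonneg_nonneg mult_nonneg_nonneg) auto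
  next
    show "((\<lambda>z. - z * std_normal_density z / (1 + z\<^sup>2)) \<longlongrightarrow> 0) at_top"
      unfolding std_normal_density_def by real_asymp
  qed
  then show ?thesis by simp
qed

lemma I3:
  assumes "a \<ge> 1"
  shows "has_bochner_integral lborel (\<lambda>z. indicator {a..} z * (z * (z\<^sup>2 - a\<^sup>2)\<^sup>2 * std_normal_density z)) (8 * std_normal_density a)"
proof -
  let ?F = "\<lambda>z. - ((z\<^sup>2 - a\<^sup>2)\<^sup>2 + 4 * (z\<^sup>2 - a\<^sup>2) + 8) * std_normal_density z"
  let ?f = "\<lambda>z. z * (z\<^sup>2 - a\<^sup>2)\<^sup>2 * std_normal_density z"
  have m: "?f \<in> borel_measurable borel" by measurable
  have d: "DERIV ?F x :> ?f x" for x
      apply (rule derivative_eq_intros refl)+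
      by (simp add: algebra_simps power2_eq_square)
  have n: "0 \<le> ?f x" if "a \<le> x" for x using that assms by auto
  have l: "(?F \<longlongrightarrow> 0) at_top"
      unfolding std_normal_density_def by real_asymp
  have "has_bochner_integral lborel (\<lambda>z. indicator {a..} z * ?f z) (0 - ?F a)"
    by (rule FTC_atLeast_bochner[OF m d n l])
  then show ?thesis by simp
qed

lemma double:
  fixes f :: "real \<Rightarrow> real"
  assumes ev: "\<And>z. f (-z) = f z" and int: "integrable lborel (\<lambda>z. indicator {a..} z * f z)" and a: "0 < a"
  shows "integrable lborel (\<lambda>z. indicator {z. a \<le> \<bar>z\<bar>} z * f z)"
    "(\<integral>z. indicator {z. a \<le> \<bar>z\<bar>} z * f z \<partial>lborel) = 2 * (\<integral>z. indicator {a..} z * f z \<partial>lborel)"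
proof -
  define g where "g z = indicator {a..} z * f z" for z
  have eq: "indicator {z. a \<le> \<bar>z\<bar>} z * f z = g z + g (-z)" for z
    using a ev[of z] by (auto simp: g_def split: split_indicator)
  have ig: "integrable lborel g" using int by (simp add: g_def[abs_def])
  have ig2: "integrable lborel (\<lambda>z. g (-z))"
    using lborel_integrable_real_affine[OF ig, of "-1" 0] by simp
  have ii: "(\<integral>z. g z \<partial>lborel) = (\<integral>z. g (-z) \<partial>lborel)"
    using lborel_integral_real_affine[of "-1" g 0] by simp
  show "integrable lborel (\<lambda>z. indicator {z. a \<le> \<bar>z\<bar>} z * f z)"
    unfolding eq using ig ig2 by simp
  show "(\<integral>z. indicator {z. a \<le> \<bar>z\<bar>} z * f z \<partial>lborel) = 2 * (\<integral>z. indicator {a..} z * f z \<partial>lborel)"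
    unfolding eq using ig ig2 ii by (simp add: g_def[abs_def])
qed

lemma integ_ind:
  fixes c0 c2 c4 :: real
  assumes "A \<in> sets borel"
  shows "integrable lborel (\<lambda>z. indicator A z * ((c4 * z^4 + c2 * z\<^sup>2 + c0) * std_normal_density z))"
proof -
  have "integrable lborel (\<lambda>z. c4 * (std_normal_density z * z^4) + c2 * (std_normal_density z * z^2) + c0 * (std_normal_density z * z^0))"
    using integrable_std_normal_moment[of 4] integrable_std_normal_moment[of 2] integrable_std_normal_moment[of 0]
    by (intro Bochner_Integration.integrable_add) auto
  then have "integrable lborel (\<lambda>z. (c4 * z^4 + c2 * z\<^sup>2 + c0) * std_normal_density z)"
    by (simp add: algebra_simps)
  then have "integrable lborel (\<lambda>z. indicator A z *\<^sub>R ((c4 * z^4 + c2 * z\<^sup>2 + c0) * std_normal_density z))"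
    using assms by (intro integrable_mult_indicator) auto
  then show ?thesis by simp
qed

lemma integ_k:
  assumes "A \<in> sets borel"
  shows "integrable lborel (\<lambda>z. indicator A z * (z^k * std_normal_density z))"
proof -
  have "integrable lborel (\<lambda>z. indicator A z *\<^sub>R (std_normal_density z * z^k))"
    using assms integrable_std_normal_moment[of k] by (intro integrable_mult_indicator) auto
  then show ?thesis by (simp add: mult.commute)
qed

lemma phi_even: "std_normal_density (-z) = std_normal_density z"
  by (simp add: std_normal_density_def)

lemma analytic:
  assumes a1: "1 \<le> a"
  shows "0 < (\<integral>z. indicator {z. a \<le> \<bar>z\<bar>} z * std_normal_density z \<partial>lborel)"
    and "a\<^sup>2 \<le> nu a" and "nu a \<le> a\<^sup>2 + 2"
    and "(\<integral>z. indicator {z. a \<le> \<bar>z\<bar>} z * (z\<^sup>2 * std_normal_density z) \<partial>lborel)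
          = nu a * (\<integral>z. indicator {z. a \<le> \<bar>z\<bar>} z * std_normal_density z \<partial>lborel)"
    and "(\<integral>z. indicator {z. a \<le> \<bar>z\<bar>} z * ((z\<^sup>2 - a\<^sup>2)\<^sup>2 * std_normal_density z) \<partial>lborel) \<le> 8 * exp (- a\<^sup>2 / 2)"
proof -
  let ?E = "{z::real. a \<le> \<bar>z\<bar>}"
  let ?phi = std_normal_density
  have a0: "0 < a" using a1 by simp
  have sH: "{a..} \<in> sets borel" by simp
  define Q where "Q = (\<integral>z. indicator {a..} z * ?phi z \<partial>lborel)"
  define M2 where "M2 = (\<integral>z. indicator {a..} z * (z\<^sup>2 * ?phi z) \<partial>lborel)"
  have iQ: "integrable lborel (\<lambda>z. indicator {a..} z * ?phi z)"
    using integ_k[OF sH, of 0] by simp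
  have iM2: "integrable lborel (\<lambda>z. indicator {a..} z * (z\<^sup>2 * ?phi z))"
    using integ_k[OF sH, of 2] by simp
  have "(\<integral>z. indicator {a..} z * ((z\<^sup>2 - 1) * ?phi z) \<partial>lborel) = a * ?phi a"
    using I1[OF a1] by (rule has_bochner_integral_integral_eq)
  moreover have "(\<integral>z. indicator {a..} z * ((z\<^sup>2 - 1) * ?phi z) \<partial>lborel) = M2 - Q"
  proof -
    have "(\<lambda>z. indicator {a..} z * ((z\<^sup>2 - 1) * ?phi z)) = (\<lambda>z. indicator {a..} z * (z\<^sup>2 * ?phi z) - indicator {a..} z * ?phi z)"
      by (auto simp: algebra_simps)
    then show ?thesis unfolding M2_def Q_def using Bochner_Integration.integral_diff[OF iM2 iQ] by simp
  qed
  ultimately have M2Q: "M2 = a * ?phi a + Q" by simp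
  have I2i: "integrable lborel (\<lambda>z. indicator {a..} z * (?phi z * (z^4 + 2*z\<^sup>2 - 1) / (1 + z\<^sup>2)\<^sup>2))"
    using I2[OF a1] by (rule integrable.intros)
  have "a * ?phi a / (1 + a\<^sup>2) = (\<integral>z. indicator {a..} z * (?phi z * (z^4 + 2*z\<^sup>2 - 1) / (1 + z\<^sup>2)\<^sup>2) \<partial>lborel)"
    using I2[OF a1] by (rule has_bochner_integral_integral_eq[symmetric])
  also have "\<dots> \<le> Q" unfolding Q_def
  proof (rule Bochner_Integration.integral_mono[OF I2i iQ])
    fix z :: real
    have p0: "1 + z\<^sup>2 \<noteq> 0" using zero_le_power2[of z] by linarith
    then have p: "0 < (1 + z\<^sup>2)\<^sup>2" by simp
    have "(z^4 + 2*z\<^sup>2 - 1) \<le> (1 + z\<^sup>2)\<^sup>2" by (simp add: power2_eq_square power4_eq_xxxx algebra_simps)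
    then have "(z^4 + 2*z\<^sup>2 - 1) / (1 + z\<^sup>2)\<^sup>2 \<le> 1" using p by simp
    then have "?phi z * ((z^4 + 2*z\<^sup>2 - 1) / (1 + z\<^sup>2)\<^sup>2) \<le> ?phi z * 1"
      by (intro mult_left_mono) auto
    then show "indicator {a..} z * (?phi z * (z^4 + 2*z\<^sup>2 - 1) / (1 + z\<^sup>2)\<^sup>2) \<le> indicator {a..} z * ?phi z"
      by (auto split: split_indicator)
  qed
  finally have Qlow: "a * ?phi a / (1 + a\<^sup>2) \<le> Q" .
  have phia: "0 < ?phi a" by (simp add: std_normal_density_def)
  have Qpos: "0 < Q" using Qlow a0 phia by (smt (verit) divide_pos_pos mult_pos_pos zero_le_power2)
  have Qlow2: "a * ?phi a \<le> (1 + a\<^sup>2) * Q"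
    using Qlow by (simp add: field_simps add_pos_nonneg)
  have "(\<integral>z. indicator {a..} z * (a\<^sup>2 * ?phi z) \<partial>lborel) \<le> M2" unfolding M2_def
  proof (rule Bochner_Integration.integral_mono)
    have eqf: "(\<lambda>z. indicator {a..} z * (a\<^sup>2 * ?phi z)) = (\<lambda>z. a\<^sup>2 * (indicator {a..} z * ?phi z))"
      by (auto simp: fun_eq_iff)
    show "integrable lborel (\<lambda>z. indicator {a..} z * (a\<^sup>2 * ?phi z))" unfolding eqf using iQ by simp
    show "integrable lborel (\<lambda>z. indicator {a..} z * (z\<^sup>2 * ?phi z))" by (rule iM2)
    fix z :: real
    have "z \<ge> a \<Longrightarrow> a\<^sup>2 \<le> z\<^sup>2" using a0 by (intro power_mono) auto
    then show "indicator {a..} z * (a\<^sup>2 * ?phi z) \<le> indicator {a..} z * (z\<^sup>2 * ?phi z)"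
      by (auto split: split_indicator intro!: mult_right_mono)
  qed
  moreover have "(\<integral>z. indicator {a..} z * (a\<^sup>2 * ?phi z) \<partial>lborel) = a\<^sup>2 * Q"
    unfolding Q_def by (simp add: mult.left_commute[of "indicator {a..} _"])
  ultimately have M2low: "a\<^sup>2 * Q \<le> M2" by simp
  have dq: "(\<integral>z. indicator ?E z * ?phi z \<partial>lborel) = 2 * Q"
    unfolding Q_def by (rule double(2)[OF phi_even iQ a0])
  have dm: "(\<integral>z. indicator ?E z * (z\<^sup>2 * ?phi z) \<partial>lborel) = 2 * M2"
    unfolding M2_def by (rule double(2)[OF _ iM2 a0]) (simp add: phi_even)
  have nu: "nu a = M2 / Q"
    unfolding nu_def set_lebesgue_integral_def using dq dm by simp
  show "0 < (\<integral>z. indicator ?E z * ?phi z \<partial>lborel)" using dq Qpos by simp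
  show "a\<^sup>2 \<le> nu a" unfolding nu using M2low Qpos by (simp add: field_simps)
  show "nu a \<le> a\<^sup>2 + 2" unfolding nu using M2Q Qlow2 Qpos by (simp add: field_simps)
  show "(\<integral>z. indicator ?E z * (z\<^sup>2 * ?phi z) \<partial>lborel) = nu a * (\<integral>z. indicator ?E z * ?phi z \<partial>lborel)"
    unfolding dq dm nu using Qpos by simp
  have iV: "integrable lborel (\<lambda>z. indicator {a..} z * ((z\<^sup>2 - a\<^sup>2)\<^sup>2 * ?phi z))"
    using integ_ind[OF sH, of 1 "-2*a\<^sup>2" "a^4"] by (simp add: power2_eq_square power4_eq_xxxx algebra_simps)
  have "(\<integral>z. indicator ?E z * ((z\<^sup>2 - a\<^sup>2)\<^sup>2 * ?phi z) \<partial>lborel) = 2 * (\<integral>z. indicator {a..} z * ((z\<^sup>2 - a\<^sup>2)\<^sup>2 * ?phi z) \<partial>lborel)"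
    by (rule double(2)[OF _ iV a0]) (simp add: phi_even)
  also have "(\<integral>z. indicator {a..} z * ((z\<^sup>2 - a\<^sup>2)\<^sup>2 * ?phi z) \<partial>lborel) \<le> (\<integral>z. indicator {a..} z * (z * (z\<^sup>2 - a\<^sup>2)\<^sup>2 * ?phi z) \<partial>lborel)"
  proof (rule Bochner_Integration.integral_mono[OF iV])
    show "integrable lborel (\<lambda>z. indicator {a..} z * (z * (z\<^sup>2 - a\<^sup>2)\<^sup>2 * ?phi z))"
      using I3[OF a1] by (rule integrable.intros)
    fix z :: real
    have "a \<le> z \<Longrightarrow> 1 * ((z\<^sup>2 - a\<^sup>2)\<^sup>2 * ?phi z) \<le> z * ((z\<^sup>2 - a\<^sup>2)\<^sup>2 * ?phi z)"
      using a1 by (intro mult_right_mono) auto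
    then show "indicator {a..} z * ((z\<^sup>2 - a\<^sup>2)\<^sup>2 * ?phi z) \<le> indicator {a..} z * (z * (z\<^sup>2 - a\<^sup>2)\<^sup>2 * ?phi z)"
      by (auto split: split_indicator simp: mult.assoc)
  qed
  also have "(\<integral>z. indicator {a..} z * (z * (z\<^sup>2 - a\<^sup>2)\<^sup>2 * ?phi z) \<partial>lborel) = 8 * ?phi a"
    using I3[OF a1] by (rule has_bochner_integral_integral_eq)
  also have "2 * (8 * ?phi a) \<le> 8 * exp (- a\<^sup>2 / 2)"
  proof -
    have "2 \<le> sqrt (2 * pi)" using pi_gt3 by (simp add: real_le_rsqrt)
    then have "1 / sqrt (2 * pi) \<le> 1 / 2" by (simp add: field_simps)
    then show ?thesis unfolding std_normal_density_def
      using exp_gt_zero[of "- a\<^sup>2 / 2"] by (simp add: field_simps)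
  qed
  finally show "(\<integral>z. indicator ?E z * ((z\<^sup>2 - a\<^sup>2)\<^sup>2 * ?phi z) \<partial>lborel) \<le> 8 * exp (- a\<^sup>2 / 2)"
    by simp
qed

lemma exp_quad_neg:
  fixes u :: real assumes "u \<le> 0" shows "exp u \<le> 1 + u + u\<^sup>2 / 2"
proof -
  let ?g = "\<lambda>u::real. 1 + u + u\<^sup>2 / 2 - exp u"
  have "?g 0 \<le> ?g u"
  proof (rule DERIV_nonpos_imp_nonincreasing[OF assms])
    fix x :: real
    have "DERIV ?g x :> 1 + x - exp x"
      by (auto intro!: derivative_eq_intros)
    moreover have "1 + x - exp x \<le> 0" using exp_ge_add_one_self[of x] by simp
    ultimately show "\<exists>y. DERIV ?g x :> y \<and> y \<le> 0" by blast
  qed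
  then show ?thesis by simp
qed

lemma key:
  fixes l s nu a :: real
  assumes "0 < l" "l \<le> 1/2" "a\<^sup>2 \<le> s" "a\<^sup>2 \<le> nu" "nu \<le> a\<^sup>2 + 2"
  shows "exp (- l * (s - nu)) \<le> 1 - l * (s - nu) + l\<^sup>2 / 2 * ((s - nu)\<^sup>2 + (nu - a\<^sup>2)\<^sup>2)"
proof (cases "nu \<le> s")
  case True
  have "exp (- l * (s - nu)) \<le> 1 + (- l * (s - nu)) + (- l * (s - nu))\<^sup>2 / 2"
    using True assms by (intro exp_quad_neg) (simp add: mult_nonneg_nonneg)
  also have "\<dots> \<le> 1 - l * (s - nu) + l\<^sup>2 / 2 * ((s - nu)\<^sup>2 + (nu - a\<^sup>2)\<^sup>2)"
  proof -
    have "(- l * (s - nu))\<^sup>2 = l\<^sup>2 * (s - nu)\<^sup>2" by (simp add: power_mult_distrib)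
    moreover have "0 \<le> l\<^sup>2 * (nu - a\<^sup>2)\<^sup>2" by simp
    moreover have "l\<^sup>2 / 2 * ((s - nu)\<^sup>2 + (nu - a\<^sup>2)\<^sup>2) = l\<^sup>2 * (s - nu)\<^sup>2 / 2 + l\<^sup>2 * (nu - a\<^sup>2)\<^sup>2 / 2"
      by (simp add: algebra_simps)
    ultimately show ?thesis by linarith
  qed
  finally show ?thesis .
next
  case False
  have u1: "l * (nu - s) \<le> 1"
  proof -
    have "l * (nu - s) \<le> (1/2) * 2" using assms False by (intro mult_mono) auto
    then show ?thesis by simp
  qed
  have "exp (- l * (s - nu)) = exp (l * (nu - s))" by (simp add: algebra_simps)
  also have "\<dots> \<le> 1 + l * (nu - s) + (l * (nu - s))\<^sup>2"
    using False assms u1 by (intro exp_bound) auto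
  also have "\<dots> \<le> 1 - l * (s - nu) + l\<^sup>2 / 2 * ((s - nu)\<^sup>2 + (nu - a\<^sup>2)\<^sup>2)"
  proof -
    have "(nu - s)\<^sup>2 \<le> (nu - a\<^sup>2)\<^sup>2" using False assms by (intro power_mono) auto
    then have "l\<^sup>2 * (nu - s)\<^sup>2 \<le> l\<^sup>2 * (nu - a\<^sup>2)\<^sup>2" by (intro mult_left_mono) auto
    moreover have "(l * (nu - s))\<^sup>2 = l\<^sup>2 * (s - nu)\<^sup>2" "l\<^sup>2 * (nu - s)\<^sup>2 = l\<^sup>2 * (s - nu)\<^sup>2"
      by (simp_all add: power_mult_distrib power2_commute)
    moreover have "l\<^sup>2 / 2 * ((s - nu)\<^sup>2 + (nu - a\<^sup>2)\<^sup>2) = l\<^sup>2 * (s - nu)\<^sup>2 / 2 + l\<^sup>2 * (nu - a\<^sup>2)\<^sup>2 / 2"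
      by (simp add: algebra_simps)
    moreover have "l * (nu - s) = - (l * (s - nu))" by (simp add: algebra_simps)
    ultimately show ?thesis by linarith
  qed
  finally show ?thesis .
qed

lemma pervar:
  assumes a1: "1 \<le> a" and l: "0 < l" "l \<le> 1/2"
  shows "integrable lborel (\<lambda>z. std_normal_density z * exp (- l * ((z\<^sup>2 - nu a) * indicator {y. \<bar>y\<bar> \<ge> a} z)))"
    "(\<integral>z. std_normal_density z * exp (- l * ((z\<^sup>2 - nu a) * indicator {y. \<bar>y\<bar> \<ge> a} z)) \<partial>lborel) \<le> 1 + 4 * l\<^sup>2 * exp (- a\<^sup>2 / 2)"
proof -
  let ?E = "{z::real. a \<le> \<bar>z\<bar>}"
  let ?phi = std_normal_density
  define c where "c = nu a - a\<^sup>2"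
  define q where "q = (\<integral>z. indicator ?E z * ?phi z \<partial>lborel)"
  define m2 where "m2 = (\<integral>z. indicator ?E z * (z\<^sup>2 * ?phi z) \<partial>lborel)"
  define V where "V = (\<integral>z. indicator ?E z * ((z\<^sup>2 - a\<^sup>2)\<^sup>2 * ?phi z) \<partial>lborel)"
  note an = analytic[OF a1]
  have m2q: "m2 = nu a * q" unfolding m2_def q_def by (rule an(4))
  have V8: "V \<le> 8 * exp (- a\<^sup>2 / 2)" unfolding V_def by (rule an(5))
  have sE: "?E \<in> sets borel" by measurable
  have iq: "integrable lborel (\<lambda>z. indicator ?E z * ?phi z)" using integ_k[OF sE, of 0] by simp
  have im2: "integrable lborel (\<lambda>z. indicator ?E z * (z\<^sup>2 * ?phi z))" using integ_k[OF sE, of 2] by simp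
  have iV: "integrable lborel (\<lambda>z. indicator ?E z * ((z\<^sup>2 - a\<^sup>2)\<^sup>2 * ?phi z))"
    using integ_ind[OF sE, of 1 "-2*a\<^sup>2" "a^4"] by (simp add: power2_eq_square power4_eq_xxxx algebra_simps)
  define al1 where "al1 = l * nu a + l\<^sup>2 * (c * a\<^sup>2 + c\<^sup>2)"
  define al2 where "al2 = - l - l\<^sup>2 * c"
  define al3 where "al3 = l\<^sup>2 / 2"
  define R where "R z = ?phi z + al1 * (indicator ?E z * ?phi z) + al2 * (indicator ?E z * (z\<^sup>2 * ?phi z))
     + al3 * (indicator ?E z * ((z\<^sup>2 - a\<^sup>2)\<^sup>2 * ?phi z))" for z
  have iR: "integrable lborel R" unfolding R_def[abs_def] using iq im2 iV by auto
  have intR: "(\<integral>z. R z \<partial>lborel) = 1 + al1 * q + al2 * m2 + al3 * V"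
    unfolding R_def q_def m2_def V_def using iq im2 iV by simp
  have pw: "?phi z * exp (- l * ((z\<^sup>2 - nu a) * indicator {y. \<bar>y\<bar> \<ge> a} z)) \<le> R z" for z
  proof (cases "a \<le> \<bar>z\<bar>")
    case False then show ?thesis by (simp add: R_def)
  next
    case True
    have s: "a\<^sup>2 \<le> z\<^sup>2" using True a1 by (metis abs_le_square_iff abs_of_nonneg order.trans zero_le_one)
    have "exp (- l * (z\<^sup>2 - nu a)) \<le> 1 - l * (z\<^sup>2 - nu a) + l\<^sup>2 / 2 * ((z\<^sup>2 - nu a)\<^sup>2 + (nu a - a\<^sup>2)\<^sup>2)"
      by (rule key[OF l s an(2) an(3)])
    also have "\<dots> = 1 + al1 + al2 * z\<^sup>2 + al3 * (z\<^sup>2 - a\<^sup>2)\<^sup>2"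
      unfolding al1_def al2_def al3_def c_def by (simp add: power2_eq_square algebra_simps)
    finally have "?phi z * exp (- l * (z\<^sup>2 - nu a)) \<le> ?phi z * (1 + al1 + al2 * z\<^sup>2 + al3 * (z\<^sup>2 - a\<^sup>2)\<^sup>2)"
      by (intro mult_left_mono) auto
    then show ?thesis using True by (simp add: R_def algebra_simps)
  qed
  have meas: "(\<lambda>z. ?phi z * exp (- l * ((z\<^sup>2 - nu a) * indicator {y. \<bar>y\<bar> \<ge> a} z))) \<in> borel_measurable lborel"
    by measurable
  show int: "integrable lborel (\<lambda>z. ?phi z * exp (- l * ((z\<^sup>2 - nu a) * indicator {y. \<bar>y\<bar> \<ge> a} z)))"
  proof (rule Bochner_Integration.integrable_bound[OF iR meas])
    show "AE x in lborel. norm (?phi x * exp (- l * ((x\<^sup>2 - nu a) * indicator {y. \<bar>y\<bar> \<ge> a} x))) \<le> norm (R x)"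
    proof (rule AE_I2)
      fix x
      have "0 \<le> ?phi x * exp (- l * ((x\<^sup>2 - nu a) * indicator {y. \<bar>y\<bar> \<ge> a} x))" by simp
      then show "norm (?phi x * exp (- l * ((x\<^sup>2 - nu a) * indicator {y. \<bar>y\<bar> \<ge> a} x))) \<le> norm (R x)"
        using pw[of x] by simp
    qed
  qed
  have "(\<integral>z. ?phi z * exp (- l * ((z\<^sup>2 - nu a) * indicator {y. \<bar>y\<bar> \<ge> a} z)) \<partial>lborel) \<le> (\<integral>z. R z \<partial>lborel)"
    by (rule Bochner_Integration.integral_mono[OF int iR pw])
  also have "\<dots> = 1 + l\<^sup>2 / 2 * V"
    unfolding intR m2q al1_def al2_def al3_def c_def by (simp add: algebra_simps power2_eq_square)
  also have "\<dots> \<le> 1 + l\<^sup>2 / 2 * (8 * exp (- a\<^sup>2 / 2))"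
    using V8 by (intro add_left_mono mult_left_mono) auto
  finally show "(\<integral>z. ?phi z * exp (- l * ((z\<^sup>2 - nu a) * indicator {y. \<bar>y\<bar> \<ge> a} z)) \<partial>lborel) \<le> 1 + 4 * l\<^sup>2 * exp (- a\<^sup>2 / 2)"
    by simp
qed


theorem lemma3:
  fixes M :: "'a measure" and Z :: "nat \<Rightarrow> 'a \<Rightarrow> real"
    and p :: nat and a x :: real
  assumes "prob_space M"
    and "prob_space.indep_vars M (\<lambda>i. borel) Z {1..p}"
    and "\<And>i. i \<in> {1..p} \<Longrightarrow> distributed M lborel (Z i) std_normal_density"
    and "a \<ge> 1"
    and "x > 0"
  shows "measure M {\<omega> \<in> space M.
            (\<Sum>i=1..p. ((Z i \<omega>)\<^sup>2 - nu a) * indicator {y. \<bar>y\<bar> \<ge> a} (Z i \<omega>))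
              \<le> - 5 * (sqrt (real p * exp (- a\<^sup>2 / 2) * x) + x)}
         \<le> exp (- x)"
proof -
  interpret prob_space M by fact
  note indep = assms(2) and distr = assms(3) and a1 = assms(4) and x0 = assms(5)
  define g where "g l z = exp (- l * ((z\<^sup>2 - nu a) * indicator {y. \<bar>y\<bar> \<ge> a} z))" for l z :: real
  define S where "S \<omega> = (\<Sum>i=1..p. ((Z i \<omega>)\<^sup>2 - nu a) * indicator {y. \<bar>y\<bar> \<ge> a} (Z i \<omega>))" for \<omega>
  define B where "B = real p * exp (- a\<^sup>2 / 2)"
  define t where "t = 5 * (sqrt (B * x) + x)"
  have gm: "g l \<in> borel_measurable borel" for l unfolding g_def by measurable
  have rv: "random_variable borel (Z i)" if "i \<in> {1..p}" for i
    using distr[OF that] by (simp add: distributed_def)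
  have chern: "measure M {\<omega> \<in> space M. S \<omega> \<le> - t} \<le> exp (4 * l\<^sup>2 * B - l * t)"
    if l: "0 < l" "l \<le> 1/2" for l
  proof -
    have prodeq: "exp (- l * S \<omega>) = (\<Prod>i\<in>{1..p}. g l (Z i \<omega>))" for \<omega>
      unfolding S_def g_def sum_distrib_left by (rule exp_sum) simp
    have ind2: "indep_vars (\<lambda>_. borel) (\<lambda>i \<omega>. g l (Z i \<omega>)) {1..p}"
      by (rule indep_vars_compose2[OF indep]) (simp add: gm)
    have intg: "integrable M (\<lambda>\<omega>. g l (Z i \<omega>))" if "i \<in> {1..p}" for i
    proof -
      have "integrable lborel (\<lambda>z. std_normal_density z * g l z)"
        unfolding g_def by (rule pervar(1)[OF a1 l])
      then show ?thesis
        using distributed_integrable[OF distr[OF that], of "g l"] gm by simp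
    qed
    have Eg: "(\<integral>\<omega>. g l (Z i \<omega>) \<partial>M) \<le> 1 + 4 * l\<^sup>2 * exp (- a\<^sup>2 / 2)" if "i \<in> {1..p}" for i
    proof -
      have "(\<integral>\<omega>. g l (Z i \<omega>) \<partial>M) = (\<integral>z. std_normal_density z * g l z \<partial>lborel)"
        using distributed_integral[OF distr[OF that], of "g l"] gm by simp
      also have "\<dots> \<le> 1 + 4 * l\<^sup>2 * exp (- a\<^sup>2 / 2)"
        unfolding g_def by (rule pervar(2)[OF a1 l])
      finally show ?thesis .
    qed
    have Eprod: "(\<integral>\<omega>. exp (- l * S \<omega>) \<partial>M) \<le> exp (4 * l\<^sup>2 * B)"
    proof -
      have "(\<integral>\<omega>. exp (- l * S \<omega>) \<partial>M) = (\<integral>\<omega>. (\<Prod>i\<in>{1..p}. g l (Z i \<omega>)) \<partial>M)"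
        by (simp only: prodeq)
      also have "\<dots> = (\<Prod>i\<in>{1..p}. (\<integral>\<omega>. g l (Z i \<omega>) \<partial>M))"
        by (rule indep_vars_lebesgue_integral[OF _ ind2 intg]) auto
      also have "\<dots> \<le> (\<Prod>i\<in>{1..p}. exp (4 * l\<^sup>2 * exp (- a\<^sup>2 / 2)))"
      proof (rule prod_mono)
        fix i assume i: "i \<in> {1..p}"
        have "0 \<le> (\<integral>\<omega>. g l (Z i \<omega>) \<partial>M)" by (rule integral_nonneg_AE) (simp add: g_def)
        moreover have "(\<integral>\<omega>. g l (Z i \<omega>) \<partial>M) \<le> exp (4 * l\<^sup>2 * exp (- a\<^sup>2 / 2))"
          using Eg[OF i] exp_ge_add_one_self[of "4 * l\<^sup>2 * exp (- a\<^sup>2 / 2)"] by linarith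
        ultimately show "0 \<le> (\<integral>\<omega>. g l (Z i \<omega>) \<partial>M) \<and> (\<integral>\<omega>. g l (Z i \<omega>) \<partial>M) \<le> exp (4 * l\<^sup>2 * exp (- a\<^sup>2 / 2))"
          by simp
      qed
      also have "\<dots> = exp (4 * l\<^sup>2 * exp (- a\<^sup>2 / 2)) ^ p"
        by simp
      also have "\<dots> = exp (real p * (4 * l\<^sup>2 * exp (- a\<^sup>2 / 2)))"
        by (rule exp_of_nat_mult[symmetric])
      also have "real p * (4 * l\<^sup>2 * exp (- a\<^sup>2 / 2)) = 4 * l\<^sup>2 * B"
        unfolding B_def by (simp only: mult_ac)
      finally show ?thesis .
    qed
    have intS: "integrable M (\<lambda>\<omega>. exp (- l * S \<omega>))"
      unfolding prodeq by (rule indep_vars_integrable[OF _ ind2 intg]) auto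
    have seteq: "{\<omega> \<in> space M. S \<omega> \<le> - t} = {\<omega> \<in> space M. exp (- l * S \<omega>) \<ge> exp (l * t)}"
    proof -
      have "S \<omega> \<le> - t \<longleftrightarrow> l * t \<le> - l * S \<omega>" for \<omega>
        using l mult_le_cancel_left_pos[of l t "- S \<omega>"] by auto
      then show ?thesis by auto
    qed
    have "measure M {\<omega> \<in> space M. S \<omega> \<le> - t} \<le> (\<integral>\<omega>. exp (- l * S \<omega>) \<partial>M) / exp (l * t)"
      unfolding seteq by (rule integral_Markov_inequality_measure[OF intS]) auto
    also have "\<dots> \<le> exp (4 * l\<^sup>2 * B) / exp (l * t)"
      using Eprod by (simp add: divide_right_mono)
    also have "\<dots> = exp (4 * l\<^sup>2 * B - l * t)" by (simp add: exp_diff)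
    finally show ?thesis .
  qed
  have B0: "0 \<le> B" unfolding B_def by simp
  have "measure M {\<omega> \<in> space M. S \<omega> \<le> - t} \<le> exp (- x)"
  proof (cases "x \<le> B")
    case True
    then have Bp: "0 < B" using x0 by simp
    define l where "l = sqrt (x / (4 * B))"
    have l0: "0 < l" unfolding l_def using Bp x0 by simp
    have l2: "l\<^sup>2 = x / (4 * B)" unfolding l_def using Bp x0 by simp
    have lh: "l \<le> 1/2"
    proof -
      have "x / (4 * B) \<le> B / (4 * B)" using True Bp by (intro divide_right_mono) auto
      also have "B / (4 * B) = (1/2)\<^sup>2" using Bp by (simp add: power2_eq_square)
      finally have "l\<^sup>2 \<le> (1/2)\<^sup>2" unfolding l2 .
      then show ?thesis by (rule power2_le_imp_le) simp
    qed
    have "l * sqrt (B * x) = sqrt (x / (4 * B) * (B * x))" unfolding l_def by (rule real_sqrt_mult[symmetric])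
    also have "x / (4 * B) * (B * x) = (x / 2)\<^sup>2" using Bp by (simp add: power2_eq_square)
    also have "sqrt ((x / 2)\<^sup>2) = x / 2" using x0 by simp
    finally have lsq: "l * sqrt (B * x) = x / 2" .
    have e4: "4 * (x / (4 * B)) * B = x" using Bp by simp
    have "4 * l\<^sup>2 * B - l * t = x - 5 * (l * sqrt (B * x)) - 5 * l * x"
      unfolding l2 t_def e4 by (simp add: algebra_simps)
    also have "\<dots> \<le> - x" unfolding lsq using mult_nonneg_nonneg[of l x] l0 x0 by linarith
    finally have "4 * l\<^sup>2 * B - l * t \<le> - x" .
    then have "exp (4 * l\<^sup>2 * B - l * t) \<le> exp (- x)" by simp
    then show ?thesis using chern[OF l0 lh] by linarith
  next
    case False
    have sq: "0 \<le> sqrt (B * x)" using B0 x0 by simp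
    have "4 * (1/2)\<^sup>2 * B - (1/2) * t \<le> - x"
    proof -
      have "4 * (1/2)\<^sup>2 * B - (1/2) * t = B - 5/2 * sqrt (B * x) - 5/2 * x"
        unfolding t_def by (simp add: power2_eq_square algebra_simps)
      then show ?thesis using False sq x0 by linarith
    qed
    then have "exp (4 * (1/2)\<^sup>2 * B - (1/2) * t) \<le> exp (- x)" by simp
    moreover have "measure M {\<omega> \<in> space M. S \<omega> \<le> - t} \<le> exp (4 * (1/2)\<^sup>2 * B - (1/2) * t)"
      by (rule chern) auto
    ultimately show ?thesis by linarith
  qed
  then show ?thesis by (simp only: S_def t_def B_def mult_minus_left)
qed

end
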